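(* Let $\phi:K\to\mathbb R$ be a convex function that attains its minimum value at $0$. Then for all $x,y\in K$ with $|x|\le|y|$ we have $\phi(x)\le\phi(y)$.
   Context: $K$ is a field complete with respect to a non-trivial non-archimedean absolute value, $B_K=\{x\in K:|x|\le1\}$. A function $\phi:E\to\mathbb R$ on a $K$-vector space $E$ is convex if for all $n$, $x_1,\dots,x_n\in E$ and $\lambda_1,\dots,\lambda_n\in B_K$ with $\sum\lambda_i=1$ one has $\phi(\sum\lambda_ix_i)\le\max_i|\lambda_i|\phi(x_i)$. *)

theory Defs
  imports Complex_Main
begin

definition nonarch_absval :: "('k::field \<Rightarrow> real) \<Rightarrow> bool" where
  "nonarch_absval av \<longleftrightarrow>
     (\<forall>x. 0 \<le> av x) \<and> (\<forall>x. av x = 0 \<longleftrightarrow> x = 0) \<and>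
     (\<forall>x y. av (x * y) = av x * av y) \<and>
     (\<forall>x y. av (x + y) \<le> max (av x) (av y))"

definition nontrivial_absval :: "('k::field \<Rightarrow> real) \<Rightarrow> bool" where
  "nontrivial_absval av \<longleftrightarrow> (\<exists>x. x \<noteq> 0 \<and> av x \<noteq> 1)"

definition complete_absval :: "('k::field \<Rightarrow> real) \<Rightarrow> bool" where
  "complete_absval av \<longleftrightarrow>
     (\<forall>s :: nat \<Rightarrow> 'k.
        (\<forall>e>0. \<exists>N. \<forall>m\<ge>N. \<forall>n\<ge>N. av (s m - s n) < e) \<longrightarrow>
        (\<exists>l. \<forall>e>0. \<exists>N. \<forall>n\<ge>N. av (s n - l) < e))"

text \<open>Convexity of phi : E \<rightarrow> R, for E = K viewed as a K-vector space
  (scalar multiplication = field multiplication).\<close>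
definition convex_fun :: "('k::field \<Rightarrow> real) \<Rightarrow> ('k \<Rightarrow> real) \<Rightarrow> bool" where
  "convex_fun av phi \<longleftrightarrow>
     (\<forall>(n::nat) (x::nat \<Rightarrow> 'k) (lam::nat \<Rightarrow> 'k).
        (\<forall>i<n. av (lam i) \<le> 1) \<and> (\<Sum>i<n. lam i) = 1 \<longrightarrow>
        phi (\<Sum>i<n. lam i * x i) \<le> Max ((\<lambda>i. av (lam i) * phi (x i)) ` {..<n}))"

end

theory Submission
  imports Defs
begin

lemma conv3:
  assumes "convex_fun av phi" "av a \<le> 1" "av b \<le> 1" "av c \<le> 1" "a + b + c = 1"
  shows "phi (a*p + b*q + c*r) \<le> max (av a * phi p) (max (av b * phi q) (av c * phi r))"
proof -
  define lam where "lam = (\<lambda>i::nat. if i = 0 then a else if i = 1 then b else c)"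
  define xs where "xs = (\<lambda>i::nat. if i = 0 then p else if i = 1 then q else r)"
  have e: "{..<3::nat} = {0,1,2}" by auto
  have "(\<forall>i<3. av (lam i) \<le> 1) \<and> (\<Sum>i<3. lam i) = 1"
    using assms by (auto simp: lam_def e add.assoc)
  then have H: "phi (\<Sum>i<3. lam i * xs i) \<le> Max ((\<lambda>i. av (lam i) * phi (xs i)) ` {..<3})"
    using assms(1) unfolding convex_fun_def by blast
  have S: "(\<Sum>i<3. lam i * xs i) = a*p + b*q + c*r"
    by (simp add: e lam_def xs_def add.assoc)
  have I: "(\<lambda>i. av (lam i) * phi (xs i)) ` {..<3} = {av a * phi p, av b * phi q, av c * phi r}"
    by (auto simp: e lam_def xs_def)
  have M: "Max {av a * phi p, av b * phi q, av c * phi r} = max (av a * phi p) (max (av b * phi q) (av c * phi r))"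
    by (simp add: max.assoc)
  show ?thesis using H unfolding S I M .
qed

lemma av_basic:
  assumes "nonarch_absval av"
  shows "av 1 = 1" "av (- a) = av a" "av (a * b) = av a * av b" "av a = 0 \<longleftrightarrow> a = 0"
    "av (a + b) \<le> max (av a) (av b)" "0 \<le> av a"
proof -
  have m: "\<And>x y. av (x*y) = av x * av y" and z: "\<And>x. av x = 0 \<longleftrightarrow> x = 0"
    and n: "\<And>x. 0 \<le> av x"
    using assms unfolding nonarch_absval_def by auto
  have "av 1 = av 1 * av 1" using m[of 1 1] by simp
  moreover have "av 1 \<noteq> 0" using z by simp
  ultimately show one: "av 1 = 1" by simp
  have "av (-1) * av (-1) = 1" using m[of "-1" "-1"] one by simp
  then have "av (-1) = 1" using n[of "-1"]
    by (metis abs_of_nonneg abs_square_eq_1 power2_eq_square)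
  then show "av (- a) = av a" using m[of "-1" a] by simp
  show "av (a * b) = av a * av b" by (rule m)
  show "av a = 0 \<longleftrightarrow> a = 0" by (rule z)
  show "av (a + b) \<le> max (av a) (av b)" using assms unfolding nonarch_absval_def by auto
  show "0 \<le> av a" by (rule n)
qed

lemma av_strict:
  assumes "nonarch_absval av" "av b < av a"
  shows "av (a + b) = av a"
proof -
  have "av (a + b) \<le> max (av a) (av b)" using av_basic(5)[OF assms(1)] .
  moreover have "av a \<le> max (av (a+b)) (av b)"
    using av_basic(5)[OF assms(1), of "a+b" "-b"] av_basic(2)[OF assms(1), of b] by simp
  ultimately show ?thesis using assms(2) by linarith
qed

theorem mainTheorem5:
  fixes av :: "'k::field \<Rightarrow> real" and phi :: "'k \<Rightarrow> real" and x y :: "'k"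
  assumes "nonarch_absval av" and "nontrivial_absval av" and "complete_absval av"
    and "convex_fun av phi"
    and "\<forall>z. phi 0 \<le> phi z"
    and "av x \<le> av y"
  shows "phi x \<le> phi y"
proof (cases "y = 0")
  case True
  have a0: "av 0 = 0" using av_basic(4)[OF assms(1), of 0] by simp
  have "av x \<le> 0" using assms(6) True a0 by simp
  then have "av x = 0" using av_basic(6)[OF assms(1), of x] by (rule antisym)
  then have "x = 0" using av_basic(4)[OF assms(1), of x] by blast
  then show ?thesis using True by simp
next
  case False
  note B = av_basic[OF assms(1)]
  define l where "l = x / y"
  have xl: "x = l * y" using False by (simp add: l_def)
  have "av y \<noteq> 0" using B(4)[of y] False by blast
  then have ypos: "av y > 0" using B(6)[of y] by simp
  have "av x = av l * av y" unfolding xl by (rule B(3))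
  then have l1: "av l \<le> 1" using assms(6) ypos
    by (simp add: mult_le_cancel_right2)
  have l0: "0 \<le> av l" using B(6) .
  have p0: "phi 0 \<le> phi y" using assms(5) by simp
  show ?thesis
  proof (cases "av l = 1 \<or> phi y \<ge> 0")
    case True
    have F0: "phi (l*y + 1*0 + (-l)*0) \<le> max (av l * phi y) (max (av 1 * phi 0) (av (-l) * phi 0))"
    proof -
      have c1: "av (1::'k) \<le> 1" using B(1) by simp
      have c2: "av (-l) \<le> 1" using B(2)[of l] l1 by simp
      have c3: "l + 1 + - l = 1" by simp
      show ?thesis using conv3[OF assms(4) l1 c1 c2 c3, of y 0 0] .
    qed
    have E: "l*y + 1*0 + (-l)*0 = x" using xl by simp
    have F: "phi x \<le> max (av l * phi y) (max (1 * phi 0) (av l * phi 0))"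
      using F0 unfolding E B(1) B(2)[of l] .
    have G1: "av l * phi y \<le> phi y"
    proof (cases "av l = 1")
      case True then show ?thesis by simp
    next
      case False
      then have "phi y \<ge> 0" using \<open>av l = 1 \<or> phi y \<ge> 0\<close> by simp
      then show ?thesis using mult_left_le_one_le[OF _ l0 l1] by simp
    qed
    have G2: "av l * phi 0 \<le> phi y"
    proof (cases "av l = 1")
      case True then show ?thesis using p0 by simp
    next
      case False
      then have "phi y \<ge> 0" using \<open>av l = 1 \<or> phi y \<ge> 0\<close> by simp
      show ?thesis
      proof (cases "phi 0 \<ge> 0")
        case True then show ?thesis using l1 p0 mult_left_le_one_le[OF True l0 l1] by linarith
      next
        case False then have "av l * phi 0 \<le> 0" using l0 by (simp add: mult_nonneg_nonpos)
        then show ?thesis using \<open>phi y \<ge> 0\<close> by linarith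
      qed
    qed
    have "max (av l * phi y) (max (1 * phi 0) (av l * phi 0)) \<le> phi y"
      using G1 G2 p0 by simp
    then show ?thesis using F by (rule order_trans[rotated])
  next
    case False
    then have lt: "av l < 1" and neg: "phi y < 0" using l1 by auto
    have a1: "av (1 - l) = 1" using av_strict[OF assms(1), of "-l" 1] lt B(1) B(2)[of l] by simp
    have a2: "av (l - 1) = 1" using a1 B(2)[of "1 - l"] by simp
    have F0: "phi (1*y + (l-1)*y + (1-l)*0) \<le> max (av 1 * phi y) (max (av (l-1) * phi y) (av (1-l) * phi 0))"
    proof -
      have c1: "av (1::'k) \<le> 1" using B(1) by simp
      have c2: "av (l - 1) \<le> 1" using a2 by simp
      have c3: "av (1 - l) \<le> 1" using a1 by simp
      have c4: "1 + (l - 1) + (1 - l) = 1" by simp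
      show ?thesis using conv3[OF assms(4) c1 c2 c3 c4, of y y 0] .
    qed
    have E: "1*y + (l-1)*y + (1-l)*0 = x" using xl by (simp add: algebra_simps)
    have F: "phi x \<le> max (1 * phi y) (max (1 * phi y) (1 * phi 0))"
      using F0 unfolding E a1 a2 B(1) .
    have "max (1 * phi y) (max (1 * phi y) (1 * phi 0)) \<le> phi y"
      using p0 by simp
    then show ?thesis using F by (rule order_trans[rotated])
  qed
qed

end
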